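(* Let $\triangle ABC$ have side lengths $a=|BC|>b=|CA|>c=|AB|$ and angles $\alpha=\angle A$, $\beta=\angle B$, $\gamma=\angle C$, and suppose $60^\circ<\beta<90^\circ<\alpha$. For $x\in\{a,b,c\}$ let $W_x$ denote the largest area of an equilateral triangle contained in the closed triangle $\triangle ABC$ having one of its sides lying on side $x$. Then the maximum of $W_a,W_b,W_c$ is attained on the long side $a$, and the minimum is attained: (i) on the middle side $b$ when $\alpha/2+\beta<120^\circ$, and on both the short side $c$ and the middle side $b$ when $\alpha/2+\beta=120^\circ$; (ii) on the short side $c$ when $\alpha/2+\beta>120^\circ$.
   Context: An equilateral triangle of largest area contained in $\triangle ABC$ with one side lying on a given side of $\triangle ABC$ is called the wedged equilateral triangle (WET) on that side; it need not have all three vertices on the boundary of $\triangle ABC$. The max (resp. min) WET is the one of largest (resp. smallest) area among the three sides. *)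

theory Defs
  imports "HOL-Analysis.Analysis"
begin

type_synonym point = "real ^ 2"

definition vertex_angle :: "point \<Rightarrow> point \<Rightarrow> point \<Rightarrow> real" where
  "vertex_angle P V Q = arccos (((P - V) \<bullet> (Q - V)) / (norm (P - V) * norm (Q - V)))"

definition equilateral :: "point \<Rightarrow> point \<Rightarrow> point \<Rightarrow> bool" where
  "equilateral P Q R \<longleftrightarrow> dist P Q > 0 \<and> dist P Q = dist Q R \<and> dist Q R = dist R P"

definition eq_area :: "point \<Rightarrow> point \<Rightarrow> real" where
  "eq_area P Q = sqrt 3 / 4 * (dist P Q)\<^sup>2"

definition wedged_areas :: "point \<Rightarrow> point \<Rightarrow> point \<Rightarrow> point \<Rightarrow> point \<Rightarrow> real set" where
  "wedged_areas A B C U V =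
     {eq_area P Q | P Q R. equilateral P Q R
        \<and> convex hull {P, Q, R} \<subseteq> convex hull {A, B, C}
        \<and> closed_segment P Q \<subseteq> closed_segment U V}"

definition WET :: "point \<Rightarrow> point \<Rightarrow> point \<Rightarrow> point \<Rightarrow> point \<Rightarrow> real" where
  "WET A B C U V = Sup (wedged_areas A B C U V)"

end

theory Submission imports Defs begin

lemma ub_real:
  fixes t1 t2 \<mu> \<nu> X2 d1 G D f1 f2 :: real
  assumes X2: "X2 > 0" and D: "D > 0" and DD: "D\<^sup>2 = X2 * G - d1\<^sup>2"
    and f1: "f1 = max 0 ((sqrt 3 * d1 / D - 1) / 2)"
    and f2: "f2 = max 0 ((sqrt 3 * (X2 - d1) / D - 1) / 2)"
    and t: "0 \<le> t1" "t1 \<le> 1" "0 \<le> t2" "t2 \<le> 1" "t1 \<noteq> t2"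
    and mn: "\<mu> \<ge> 0" "\<nu> \<ge> 0" "\<mu> + \<nu> \<le> 1"
    and h1: "(\<mu>-t1)\<^sup>2*X2 + 2*(\<mu>-t1)*\<nu>*d1 + \<nu>\<^sup>2*G = (t1-t2)\<^sup>2*X2"
    and h2: "(\<mu>-t2)\<^sup>2*X2 + 2*(\<mu>-t2)*\<nu>*d1 + \<nu>\<^sup>2*G = (t1-t2)\<^sup>2*X2"
  shows "\<bar>t2 - t1\<bar> * (1 + f1 + f2) \<le> 1"
proof -
  define m where "m = (t1 + t2) / 2"
  define \<delta> where "\<delta> = \<bar>t2 - t1\<bar>"
  have dpos: "\<delta> > 0" using t by (simp add: \<delta>_def)
  have "(t2 - t1) * ((2*\<mu> - t1 - t2) * X2 + 2 * \<nu> * d1) = 0"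
    using h1 h2 by (simp add: algebra_simps power2_eq_square) 
  hence "(2*\<mu> - t1 - t2) * X2 + 2 * \<nu> * d1 = 0" using t by simp
  hence orth: "(\<mu> - m) * X2 = - \<nu> * d1" by (simp add: m_def algebra_simps)
  have N: "(\<mu>-m)\<^sup>2*X2 + 2*(\<mu>-m)*\<nu>*d1 + \<nu>\<^sup>2*G = 3/4 * \<delta>\<^sup>2 * X2"
  proof -
    have e: "\<mu> - t1 = (\<mu> - m) + (t2 - t1)/2" by (simp add: m_def field_simps)
    have "(t1-t2)\<^sup>2*X2 = ((\<mu>-m)\<^sup>2*X2 + 2*(\<mu>-m)*\<nu>*d1 + \<nu>\<^sup>2*G) + (t2-t1)*((\<mu>-m)*X2 + \<nu>*d1) + (t2-t1)\<^sup>2*X2/4"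
      unfolding h1[symmetric] e by (simp add: field_simps power2_eq_square)
    moreover have "(t2-t1)*((\<mu>-m)*X2 + \<nu>*d1) = 0" using orth by simp
    moreover have "\<delta>\<^sup>2 = (t1-t2)\<^sup>2" "(t2-t1)\<^sup>2 = (t1-t2)\<^sup>2" by (simp_all add: \<delta>_def power2_eq_square algebra_simps)
    ultimately show ?thesis by simp
  qed
  have "(\<nu> * D)\<^sup>2 = (sqrt 3 / 2 * \<delta> * X2)\<^sup>2"
  proof -
    have "X2 * ((\<mu>-m)\<^sup>2*X2 + 2*(\<mu>-m)*\<nu>*d1 + \<nu>\<^sup>2*G) = ((\<mu>-m)*X2)\<^sup>2 + 2*((\<mu>-m)*X2)*\<nu>*d1 + \<nu>\<^sup>2*G*X2"
      by (simp add: algebra_simps power2_eq_square)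
    also have "\<dots> = \<nu>\<^sup>2 * D\<^sup>2" unfolding orth DD by (simp add: algebra_simps power2_eq_square)
    finally have "\<nu>\<^sup>2 * D\<^sup>2 = X2 * (3/4 * \<delta>\<^sup>2 * X2)" unfolding N by simp
    hence "(\<nu>*D)\<^sup>2 = 3/4*\<delta>\<^sup>2*X2\<^sup>2" by (simp add: power_mult_distrib power2_eq_square algebra_simps)
    also have "\<dots> = (sqrt 3 / 2 * \<delta> * X2)\<^sup>2" by (simp add: power_mult_distrib power_divide)
    finally show ?thesis .
  qed
  hence nD: "\<nu> * D = sqrt 3 / 2 * \<delta> * X2"
    using mn D dpos X2 by (subst (asm) power2_eq_iff_nonneg) auto
  have mu: "\<mu> = m - \<delta> * (sqrt 3 * d1 / D) / 2"
  proof -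
    have "\<mu> = m - \<nu> * d1 / X2" using orth X2 by (simp add: field_simps)
    also have "\<nu> = sqrt 3 / 2 * \<delta> * X2 / D" using nD D by (simp add: field_simps)
    finally show ?thesis using X2 D by (simp add: field_simps)
  qed
  have munu: "\<mu> + \<nu> = m + \<delta> * (sqrt 3 * (X2 - d1) / D) / 2"
  proof -
    have "\<mu> = m - \<nu> * d1 / X2" using orth X2 by (simp add: field_simps)
    moreover have "\<nu> = sqrt 3 / 2 * \<delta> * X2 / D" using nD D by (simp add: field_simps)
    ultimately show ?thesis using X2 D by (simp add: field_simps)
  qed
  define r1 where "r1 = sqrt 3 * d1 / D"
  define r2 where "r2 = sqrt 3 * (X2 - d1) / D"
  have A1: "m - \<delta> * r1 / 2 \<ge> 0" using mu mn r1_def by simp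
  have A2: "m + \<delta> * r2 / 2 \<le> 1" using munu mn r2_def by simp
  have f1': "f1 = max 0 ((r1 - 1)/2)" "f2 = max 0 ((r2 - 1)/2)" using f1 f2 r1_def r2_def by auto
  show ?thesis
  proof (cases "t1 < t2")
    case True
    hence dd: "\<delta> = t2 - t1" by (simp add: \<delta>_def)
    have "\<delta> * f1 \<le> t1" unfolding f1' using A1 dpos t unfolding m_def dd
      by (auto simp: max_def mult_ac field_simps)
    moreover have "t2 + \<delta> * f2 \<le> 1" unfolding f1' using A2 dpos t unfolding m_def dd
      by (auto simp: max_def mult_ac field_simps)
    ultimately show ?thesis unfolding \<delta>_def[symmetric] dd by (simp add: algebra_simps)
  next
    case False
    hence dd: "\<delta> = t1 - t2" using t by (simp add: \<delta>_def)
    have "\<delta> * f1 \<le> t2" unfolding f1' using A1 dpos t unfolding m_def dd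
      by (auto simp: max_def mult_ac field_simps)
    moreover have "t1 + \<delta> * f2 \<le> 1" unfolding f1' using A2 dpos t unfolding m_def dd
      by (auto simp: max_def mult_ac field_simps)
    ultimately show ?thesis unfolding \<delta>_def[symmetric] dd by (simp add: algebra_simps)
  qed
qed
lemma ex_real:
  fixes X2 d1 G D f1 f2 :: real
  assumes X2: "X2 > 0" and D: "D > 0" and DD: "D\<^sup>2 = X2 * G - d1\<^sup>2"
    and f1: "f1 = max 0 ((sqrt 3 * d1 / D - 1) / 2)"
    and f2: "f2 = max 0 ((sqrt 3 * (X2 - d1) / D - 1) / 2)"
  defines "\<delta> \<equiv> 1 / (1 + f1 + f2)"
  defines "t1 \<equiv> f1 * \<delta>" and "t2 \<equiv> f1 * \<delta> + \<delta>"
  defines "\<nu> \<equiv> sqrt 3 / 2 * \<delta> * X2 / D"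
  defines "\<mu> \<equiv> (t1 + t2) / 2 - \<nu> * d1 / X2"
  shows "0 \<le> t1" "t2 \<le> 1" "t1 < t2" "\<mu> \<ge> 0" "\<nu> \<ge> 0" "\<mu> + \<nu> \<le> 1"
    "(\<mu>-t1)\<^sup>2*X2 + 2*(\<mu>-t1)*\<nu>*d1 + \<nu>\<^sup>2*G = (t1-t2)\<^sup>2*X2"
    "(\<mu>-t2)\<^sup>2*X2 + 2*(\<mu>-t2)*\<nu>*d1 + \<nu>\<^sup>2*G = (t1-t2)\<^sup>2*X2"
    "\<delta> * (1 + f1 + f2) = 1"
proof -
  have f1p: "f1 \<ge> 0" "f1 \<ge> (sqrt 3 * d1 / D - 1) / 2" using f1 by auto
  have f2p: "f2 \<ge> 0" "f2 \<ge> (sqrt 3 * (X2 - d1) / D - 1) / 2" using f2 by auto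
  have dp: "\<delta> > 0" unfolding \<delta>_def using f1p f2p by simp
  show dd: "\<delta> * (1 + f1 + f2) = 1" unfolding \<delta>_def using f1p f2p by simp
  show "0 \<le> t1" unfolding t1_def using f1p dp by simp
  show "t2 \<le> 1" unfolding t2_def using dd f2p dp
    by (metis add.commute add_increasing2 distrib_left less_eq_real_def mult.commute mult_1_right mult_nonneg_nonneg)
  show "t1 < t2" unfolding t1_def t2_def using dp by simp
  show "\<nu> \<ge> 0" unfolding \<nu>_def using dp X2 D by simp
  have nu2: "\<nu> * d1 / X2 = \<delta> * (sqrt 3 * d1 / D) / 2" unfolding \<nu>_def using X2 D by (simp add: field_simps)
  have nu3: "\<nu> = \<delta> * (sqrt 3 * X2 / D) / 2" unfolding \<nu>_def using X2 D by (simp add: field_simps)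
  have "\<mu> = \<delta> * (f1 + (1 - sqrt 3 * d1 / D) / 2)" unfolding \<mu>_def nu2 t1_def t2_def by (simp add: field_simps)
  moreover have "f1 + (1 - sqrt 3 * d1 / D) / 2 \<ge> 0"
  proof -
    define r where "r = sqrt 3 * d1 / D"
    have "(r - 1) / 2 \<le> f1" using f1p r_def by simp
    hence "f1 + (1 - r) / 2 \<ge> 0" by argo
    thus ?thesis using r_def by simp
  qed
  ultimately show "\<mu> \<ge> 0" using dp by simp
  have "\<mu> + \<nu> = \<delta> * (f1 + 1/2 + (sqrt 3 * (X2 - d1) / D) / 2)" unfolding \<mu>_def nu2 nu3 t1_def t2_def using D X2 by (simp add: field_simps)
  also have "\<dots> \<le> \<delta> * (1 + f1 + f2)"
  proof -
    define r where "r = sqrt 3 * (X2 - d1) / D"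
    have "(r - 1) / 2 \<le> f2" using f2p r_def by simp
    hence "f1 + 1/2 + r/2 \<le> 1 + f1 + f2" by argo
    thus ?thesis using r_def dp by (intro mult_left_mono) auto
  qed
  finally show "\<mu> + \<nu> \<le> 1" using dd by simp
  have key: "(\<nu> * D)\<^sup>2 = 3/4*\<delta>\<^sup>2*X2\<^sup>2" unfolding \<nu>_def using D by (simp add: power_mult_distrib power_divide)
  have m1: "\<mu> - t1 = \<delta>/2 - \<nu> * d1 / X2" unfolding \<mu>_def t1_def t2_def by (simp add: field_simps)
  have m2: "\<mu> - t2 = -\<delta>/2 - \<nu> * d1 / X2" unfolding \<mu>_def t1_def t2_def by (simp add: field_simps)
  have gen: "(s - \<nu> * d1 / X2)\<^sup>2*X2 + 2*(s - \<nu> * d1 / X2)*\<nu>*d1 + \<nu>\<^sup>2*G = s\<^sup>2 * X2 + (\<nu> * D)\<^sup>2 / X2" for s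
    using X2 unfolding power_mult_distrib DD by (simp add: field_simps power2_eq_square)
  show "(\<mu>-t1)\<^sup>2*X2 + 2*(\<mu>-t1)*\<nu>*d1 + \<nu>\<^sup>2*G = (t1-t2)\<^sup>2*X2"
    unfolding m1 gen key using X2 by (simp add: t1_def t2_def field_simps power2_eq_square)
  show "(\<mu>-t2)\<^sup>2*X2 + 2*(\<mu>-t2)*\<nu>*d1 + \<nu>\<^sup>2*G = (t1-t2)\<^sup>2*X2"
    unfolding m2 gen key using X2 by (simp add: t1_def t2_def field_simps power2_eq_square)
qed

lemma norm_comb:
  fixes e g :: point
  shows "(norm (a *\<^sub>R e + b *\<^sub>R g))\<^sup>2 = a\<^sup>2*(e\<bullet>e) + 2*a*b*(e\<bullet>g) + b\<^sup>2*(g\<bullet>g)"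
  unfolding power2_norm_eq_inner by (simp add: inner_add_left inner_add_right inner_commute[of g e] algebra_simps power2_eq_square)

lemma WET_side:
  fixes U V W :: point and X2 d1 G D f1 f2 :: real
  assumes X2: "X2 = (V-U)\<bullet>(V-U)" and d1: "d1 = (V-U)\<bullet>(W-U)" and G: "G = (W-U)\<bullet>(W-U)"
    and pos: "X2*G - d1\<^sup>2 > 0" and D: "D = sqrt (X2*G - d1\<^sup>2)"
    and f1: "f1 = max 0 ((sqrt 3 * d1 / D - 1) / 2)"
    and f2: "f2 = max 0 ((sqrt 3 * (X2 - d1) / D - 1) / 2)"
  shows "Sup {eq_area P Q | P Q R. equilateral P Q R \<and> convex hull {P,Q,R} \<subseteq> convex hull {U,V,W}
            \<and> closed_segment P Q \<subseteq> closed_segment U V} = sqrt 3 / 4 * (X2 / (1+f1+f2)\<^sup>2)"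
proof -
  define e where "e = V - U"
  define g where "g = W - U"
  have X2e: "X2 = e\<bullet>e" and d1e: "d1 = e\<bullet>g" and Ge: "G = g\<bullet>g" using X2 d1 G e_def g_def by auto
  have X2p: "X2 > 0"
  proof (rule ccontr)
    assume "\<not> X2 > 0"
    hence "e = 0" using X2e by (metis inner_gt_zero_iff)
    thus False using pos X2e d1e by simp
  qed
  have Dp: "D > 0" using pos D by simp
  have DD: "D\<^sup>2 = X2 * G - d1\<^sup>2" using pos D by simp
  have nf: "(norm (a *\<^sub>R e + b *\<^sub>R g))\<^sup>2 = a\<^sup>2*X2 + 2*a*b*d1 + b\<^sup>2*G" for a b
    unfolding X2e d1e Ge by (rule norm_comb)
  have seg: "U + t *\<^sub>R e \<in> closed_segment U V" if "0 \<le> t" "t \<le> 1" for t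
    unfolding in_segment e_def using that by (intro exI[of _ t]) (auto simp: algebra_simps)
  have hull3: "U + m *\<^sub>R e + n *\<^sub>R g \<in> convex hull {U,V,W}" if "0 \<le> m" "0 \<le> n" "m + n \<le> 1" for m n
    unfolding convex_hull_3 e_def g_def using that
    by (intro CollectI exI[of _ "1 - m - n"] exI[of _ m] exI[of _ n]) (auto simp: algebra_simps)
  let ?S = "{eq_area P Q | P Q R. equilateral P Q R \<and> convex hull {P,Q,R} \<subseteq> convex hull {U,V,W}
            \<and> closed_segment P Q \<subseteq> closed_segment U V}"
  show ?thesis
  proof (rule cSup_eq_maximum)
    define \<delta> where "\<delta> = 1 / (1 + f1 + f2)"
    define t1 where "t1 = f1 * \<delta>"
    define t2 where "t2 = f1 * \<delta> + \<delta>"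
    define \<nu> where "\<nu> = sqrt 3 / 2 * \<delta> * X2 / D"
    define \<mu> where "\<mu> = (t1 + t2) / 2 - \<nu> * d1 / X2"
    note ex = ex_real[OF X2p Dp DD f1 f2, folded \<delta>_def, folded t1_def t2_def, folded \<nu>_def, folded \<mu>_def]
    define P where "P = U + t1 *\<^sub>R e"
    define Q where "Q = U + t2 *\<^sub>R e"
    define R where "R = U + \<mu> *\<^sub>R e + \<nu> *\<^sub>R g"
    have PQ: "P - Q = (t1 - t2) *\<^sub>R e + 0 *\<^sub>R g" unfolding P_def Q_def by (simp add: algebra_simps)
    have QR: "Q - R = (t2 - \<mu>) *\<^sub>R e + (-\<nu>) *\<^sub>R g" unfolding R_def Q_def by (simp add: algebra_simps)
    have RP: "R - P = (\<mu> - t1) *\<^sub>R e + \<nu> *\<^sub>R g" unfolding R_def P_def by (simp add: algebra_simps)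
    have dPQ: "(dist P Q)\<^sup>2 = (t1-t2)\<^sup>2*X2" unfolding dist_norm PQ nf by simp
    have dQR: "(dist Q R)\<^sup>2 = (t1-t2)\<^sup>2*X2" unfolding dist_norm QR nf using ex(8) by (simp add: power2_eq_square algebra_simps)
    have dRP: "(dist R P)\<^sup>2 = (t1-t2)\<^sup>2*X2" unfolding dist_norm RP nf using ex(7) by simp
    have "equilateral P Q R" unfolding equilateral_def
    proof (intro conjI)
      have "(dist P Q)\<^sup>2 > 0" unfolding dPQ using ex(3) X2p by simp
      thus "dist P Q > 0" by simp
      show "dist P Q = dist Q R" using dPQ dQR by (metis power2_eq_iff_nonneg zero_le_dist)
      show "dist Q R = dist R P" using dRP dQR by (metis power2_eq_iff_nonneg zero_le_dist)
    qed
    moreover have "convex hull {P,Q,R} \<subseteq> convex hull {U,V,W}"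
    proof (rule convex_hull_subset)
      have "P \<in> convex hull {U,V,W}" using hull3[of t1 0] ex P_def by simp
      moreover have "Q \<in> convex hull {U,V,W}" using hull3[of t2 0] ex Q_def by simp
      moreover have "R \<in> convex hull {U,V,W}" using hull3[of \<mu> \<nu>] ex R_def by simp
      ultimately show "{P,Q,R} \<subseteq> convex hull {U,V,W}" by simp
    qed
    moreover have "closed_segment P Q \<subseteq> closed_segment U V"
      using ex seg[of t1] seg[of t2] unfolding P_def Q_def
      by (intro closed_segment_subset) auto
    ultimately have "eq_area P Q \<in> ?S" by blast
    moreover have "eq_area P Q = sqrt 3 / 4 * (X2 / (1+f1+f2)\<^sup>2)"
      unfolding eq_area_def dPQ t1_def t2_def \<delta>_def by (simp add: power2_eq_square)
    ultimately show "sqrt 3 / 4 * (X2 / (1+f1+f2)\<^sup>2) \<in> ?S" by simp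
  next
    fix y assume "y \<in> ?S"
    then obtain P Q R where y: "y = eq_area P Q" and eq: "equilateral P Q R"
      and hull: "convex hull {P,Q,R} \<subseteq> convex hull {U,V,W}"
      and sg: "closed_segment P Q \<subseteq> closed_segment U V" by blast
    have "P \<in> closed_segment U V" using sg by auto
    then obtain t1 where t1: "0 \<le> t1" "t1 \<le> 1" "P = (1 - t1) *\<^sub>R U + t1 *\<^sub>R V" unfolding in_segment by blast
    have "Q \<in> closed_segment U V" using sg by auto
    then obtain t2 where t2: "0 \<le> t2" "t2 \<le> 1" "Q = (1 - t2) *\<^sub>R U + t2 *\<^sub>R V" unfolding in_segment by blast
    have "R \<in> convex hull {U,V,W}" using hull hull_inc[of R "{P,Q,R}"] by auto
    then obtain u m n where mn: "0 \<le> u" "0 \<le> m" "0 \<le> n" "u + m + n = 1" "R = u *\<^sub>R U + m *\<^sub>R V + n *\<^sub>R W"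
      unfolding convex_hull_3 by blast
    have P': "P = U + t1 *\<^sub>R e" unfolding t1 e_def by (simp add: algebra_simps)
    have Q': "Q = U + t2 *\<^sub>R e" unfolding t2 e_def by (simp add: algebra_simps)
    have u: "u = 1 - m - n" using mn by simp
    have R': "R = U + m *\<^sub>R e + n *\<^sub>R g" unfolding mn(5) u e_def g_def by (simp add: algebra_simps)
    have PQ: "P - Q = (t1 - t2) *\<^sub>R e + 0 *\<^sub>R g" unfolding P' Q' by (simp add: algebra_simps)
    have QR: "R - Q = (m - t2) *\<^sub>R e + n *\<^sub>R g" unfolding R' Q' by (simp add: algebra_simps)
    have RP: "R - P = (m - t1) *\<^sub>R e + n *\<^sub>R g" unfolding R' P' by (simp add: algebra_simps)
    have dPQ: "(dist P Q)\<^sup>2 = (t1-t2)\<^sup>2*X2" unfolding dist_norm PQ nf by simp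
    have dQR: "(dist Q R)\<^sup>2 = (m-t2)\<^sup>2*X2 + 2*(m-t2)*n*d1 + n\<^sup>2*G" proof -
      have "dist Q R = norm (R - Q)" by (simp add: dist_norm norm_minus_commute)
      thus ?thesis unfolding QR by (simp only: nf)
    qed
    have dRP: "(dist R P)\<^sup>2 = (m-t1)\<^sup>2*X2 + 2*(m-t1)*n*d1 + n\<^sup>2*G" unfolding dist_norm RP nf by simp
    have e1: "dist P Q > 0" "dist P Q = dist Q R" "dist Q R = dist R P" using eq unfolding equilateral_def by auto
    have tne: "t1 \<noteq> t2" using e1(1) P' Q' by auto
    have ub: "\<bar>t2 - t1\<bar> * (1 + f1 + f2) \<le> 1"
      using ub_real[OF X2p Dp DD f1 f2 t1(1,2) t2(1,2) tne mn(2,3), of]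
      using mn dRP dQR dPQ e1 by simp
    show "y \<le> sqrt 3 / 4 * (X2 / (1+f1+f2)\<^sup>2)"
    proof -
      define F where "F = 1 + f1 + f2"
      have Fp: "F > 0" unfolding F_def using f1 f2 by auto
      have "\<bar>t2 - t1\<bar> \<le> 1 / F" using ub Fp unfolding F_def[symmetric] by (simp add: field_simps)
      hence "\<bar>t2 - t1\<bar>\<^sup>2 \<le> (1 / F)\<^sup>2" by (intro power_mono) auto
      hence "(t1 - t2)\<^sup>2 * X2 \<le> (1/F)\<^sup>2 * X2" using X2p by (intro mult_right_mono) (auto simp: power2_commute)
      hence "sqrt 3 / 4 * ((t1 - t2)\<^sup>2 * X2) \<le> sqrt 3 / 4 * ((1/F)\<^sup>2 * X2)" by (intro mult_left_mono) auto
      thus ?thesis unfolding y eq_area_def dPQ F_def[symmetric] by (simp add: power_divide)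
    qed
  qed
qed

lemma trig_part:
  fixes a b c D p \<alpha> \<beta> :: real
  assumes pos: "a > 0" "b > 0" "c > 0" "D > 0"
    and DD: "D\<^sup>2 = a\<^sup>2*c\<^sup>2 - p\<^sup>2" and bb: "b\<^sup>2 = a\<^sup>2 + c\<^sup>2 - 2*p"
    and al: "\<alpha> = arccos ((c\<^sup>2 - p) / (c * b))" and be: "\<beta> = arccos (p / (c * a))"
    and beta: "pi / 3 < \<beta>" "\<beta> < pi / 2" and alpha: "pi / 2 < \<alpha>"
  shows "0 < p" "2*p < a*c" "c\<^sup>2 < p"
    "2*a*D - c*D - sqrt 3*c*(a\<^sup>2-p) > 0"
    "\<alpha> / 2 + \<beta> < 2 * pi / 3 \<Longrightarrow> 2*b*D - c*D - sqrt 3*c*(a\<^sup>2-p) < 0"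
    "\<alpha> / 2 + \<beta> = 2 * pi / 3 \<Longrightarrow> 2*b*D - c*D - sqrt 3*c*(a\<^sup>2-p) = 0"
    "\<alpha> / 2 + \<beta> > 2 * pi / 3 \<Longrightarrow> 2*b*D - c*D - sqrt 3*c*(a\<^sup>2-p) > 0"
proof -
  define kb where "kb = p / (c * a)"
  define ka where "ka = (c\<^sup>2 - p) / (c * b)"
  have "p\<^sup>2 \<le> a\<^sup>2*c\<^sup>2" using DD zero_le_power2[of D] by linarith
  hence "p\<^sup>2 \<le> (c*a)\<^sup>2" by (simp add: power_mult_distrib mult.commute)
  hence "\<bar>p\<bar> \<le> c * a" using pos by (metis abs_le_square_iff abs_of_pos mult_pos_pos)
  hence kb1: "-1 \<le> kb" "kb \<le> 1" unfolding kb_def using pos by (auto simp: field_simps abs_le_iff)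
  have "(c*b)\<^sup>2 - (c\<^sup>2 - p)\<^sup>2 = c\<^sup>2*b\<^sup>2 - (c\<^sup>2 - p)\<^sup>2" by (simp add: power_mult_distrib)
  also have "\<dots> = c\<^sup>2*(a\<^sup>2 + c\<^sup>2 - 2*p) - (c\<^sup>2 - p)\<^sup>2" unfolding bb ..
  also have "\<dots> = a\<^sup>2*c\<^sup>2 - p\<^sup>2" by (simp add: algebra_simps power2_eq_square)
  finally have CB: "(c*b)\<^sup>2 - (c\<^sup>2 - p)\<^sup>2 = D\<^sup>2" unfolding DD .
  hence "(c\<^sup>2 - p)\<^sup>2 \<le> (c*b)\<^sup>2" by (metis diff_ge_0_iff_ge zero_le_power2)
  hence "\<bar>c\<^sup>2 - p\<bar> \<le> c * b" using pos by (metis abs_le_square_iff abs_of_pos mult_pos_pos)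
  hence ka1: "-1 \<le> ka" "ka \<le> 1" unfolding ka_def using pos by (auto simp: field_simps abs_le_iff)
  have cb: "cos \<beta> = p / (a*c)" using kb1 be kb_def by (simp add: mult.commute)
  have ca: "cos \<alpha> = (c\<^sup>2 - p) / (b*c)" using ka1 al ka_def by (simp add: mult.commute)
  have sb: "sin \<beta> = D / (a*c)"
  proof -
    have "sin \<beta> = sqrt (1 - kb\<^sup>2)" using kb1 be kb_def by (simp add: sin_arccos)
    also have "1 - kb\<^sup>2 = (D / (a*c))\<^sup>2" unfolding kb_def using pos DD by (simp add: field_simps power2_eq_square)
    finally show ?thesis using pos by simp
  qed
  have sa: "sin \<alpha> = D / (b*c)"
  proof -
    have "sin \<alpha> = sqrt (1 - ka\<^sup>2)" using ka1 al ka_def by (simp add: sin_arccos)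
    also have "1 - ka\<^sup>2 = ((c*b)\<^sup>2 - (c\<^sup>2 - p)\<^sup>2) / (c*b)\<^sup>2" unfolding ka_def using pos by (simp add: field_simps power_divide)
    also have "\<dots> = (D / (b*c))\<^sup>2" unfolding CB by (simp add: power_divide mult.commute)
    finally show ?thesis using pos by simp
  qed
  have abnd: "\<alpha> \<le> pi" "\<beta> \<ge> 0" using al be ka1 kb1 arccos_ubound arccos_lbound unfolding ka_def kb_def by auto
  have "cos \<beta> < cos (pi/3)" using beta abnd by (intro cos_monotone_0_pi) auto
  hence "p / (a*c) < 1/2" using cb by (simp add: cos_60)
  thus "2*p < a*c" using pos by (simp add: field_simps)
  have "cos \<beta> > cos (pi/2)" using beta abnd by (intro cos_monotone_0_pi) auto
  thus "0 < p" using cb pos by (simp add: field_simps)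
  have "cos \<alpha> < cos (pi/2)" using alpha abnd by (intro cos_monotone_0_pi) auto
  thus "c\<^sup>2 < p" using ca pos by (simp add: field_simps)
  have sab: "sin (\<alpha>+\<beta>) = D / (a*b)"
    unfolding sin_add sa sb ca cb using pos by (simp add: field_simps power2_eq_square)
  have cab: "cos (\<alpha>+\<beta>) = (p - a\<^sup>2) / (a*b)"
  proof -
    have "cos (\<alpha>+\<beta>) = ((c\<^sup>2 - p) * p - D\<^sup>2) / (a*b*c\<^sup>2)"
      unfolding cos_add sa sb ca cb using pos by (simp add: field_simps power2_eq_square)
    also have "\<dots> = (p - a\<^sup>2) / (a*b)" unfolding DD using pos by (simp add: field_simps power2_eq_square)
    finally show ?thesis .
  qed
  define \<psi> where "\<psi> = \<alpha> + \<beta> - pi/3"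
  have spsi: "sin \<psi> = (sin (\<alpha>+\<beta>) - sqrt 3 * cos (\<alpha>+\<beta>)) / 2"
    unfolding \<psi>_def sin_diff by (simp add: field_simps cos_60 sin_60)
  have Eb: "2*b*D - c*D - sqrt 3*c*(a\<^sup>2-p) = 2*a*b*c*(sin \<beta> - sin \<psi>)"
    unfolding spsi sab cab sb using pos by (simp add: field_simps)
  have Ea: "2*a*D - c*D - sqrt 3*c*(a\<^sup>2-p) = 2*a*b*c*(sin \<alpha> - sin \<psi>)"
    unfolding spsi sab cab sa using pos by (simp add: field_simps)
  have ab_lt: "\<alpha> + \<beta> < pi"
  proof (rule ccontr)
    assume "\<not> \<alpha> + \<beta> < pi"
    hence "sin (\<alpha>+\<beta>) \<le> 0" using abnd beta by (intro sin_le_zero) auto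
    moreover have "D / (a*b) > 0" using pos by simp
    ultimately show False using sab by simp
  qed
  have "sin (pi - \<psi>) < sin (pi - \<alpha>)" using ab_lt beta alpha abnd unfolding \<psi>_def
    by (intro sin_monotone_2pi) auto
  hence "sin \<alpha> - sin \<psi> > 0" by simp
  thus "2*a*D - c*D - sqrt 3*c*(a\<^sup>2-p) > 0" unfolding Ea using pos by simp
  have rng: "- (pi/2) \<le> \<beta>" "\<beta> \<le> pi/2" "- (pi/2) \<le> pi - \<psi>" "pi - \<psi> \<le> pi/2"
    using ab_lt beta alpha abnd unfolding \<psi>_def by auto
  have iff: "\<beta> < pi - \<psi> \<longleftrightarrow> \<alpha> / 2 + \<beta> < 2 * pi / 3" unfolding \<psi>_def by (auto simp: field_simps)
  have iff2: "pi - \<psi> < \<beta> \<longleftrightarrow> \<alpha> / 2 + \<beta> > 2 * pi / 3" unfolding \<psi>_def by (auto simp: field_simps)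
  have iff3: "\<beta> = pi - \<psi> \<longleftrightarrow> \<alpha> / 2 + \<beta> = 2 * pi / 3" unfolding \<psi>_def by (auto simp: field_simps)
  show "\<alpha> / 2 + \<beta> < 2 * pi / 3 \<Longrightarrow> 2*b*D - c*D - sqrt 3*c*(a\<^sup>2-p) < 0"
  proof -
    assume "\<alpha> / 2 + \<beta> < 2 * pi / 3"
    hence "sin \<beta> < sin (pi - \<psi>)" using iff sin_mono_less_eq[OF rng] by simp
    thus ?thesis unfolding Eb using pos by (simp add: mult_pos_neg)
  qed
  show "\<alpha> / 2 + \<beta> > 2 * pi / 3 \<Longrightarrow> 2*b*D - c*D - sqrt 3*c*(a\<^sup>2-p) > 0"
  proof -
    assume "\<alpha> / 2 + \<beta> > 2 * pi / 3"
    hence "sin (pi - \<psi>) < sin \<beta>" using iff2 sin_mono_less_eq[OF rng(3,4,1,2)] by simp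
    thus ?thesis unfolding Eb using pos by simp
  qed
  show "\<alpha> / 2 + \<beta> = 2 * pi / 3 \<Longrightarrow> 2*b*D - c*D - sqrt 3*c*(a\<^sup>2-p) = 0"
  proof -
    assume "\<alpha> / 2 + \<beta> = 2 * pi / 3"
    hence "\<beta> = pi - \<psi>" using iff3 by simp
    thus ?thesis unfolding Eb by simp
  qed
qed

lemma sq_mono_k: "0 \<le> x \<Longrightarrow> x < y \<Longrightarrow> sqrt 3 / 4 * x\<^sup>2 < sqrt 3 / 4 * (y::real)\<^sup>2"
  by (simp add: power_strict_mono)

lemma final_real:
  fixes a b c D r fg Wa Wb Wc :: real
  assumes ab: "a > b" "b > c" "c > 0" "D > 0" and fg: "fg = max 0 ((r/D - 1)/2)"
    and Wa: "Wa = sqrt 3/4*(a\<^sup>2/(1+0+fg)\<^sup>2)" and Wb: "Wb = sqrt 3/4*(b\<^sup>2/(1+fg+0)\<^sup>2)"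
    and Wc: "Wc = sqrt 3/4*(c\<^sup>2/(1+0+0)\<^sup>2)"
    and Ea: "2*a*D - c*D - c*r > 0"
  shows "Wa = Max {Wa, Wb, Wc}"
    "2*b*D - c*D - c*r < 0 \<Longrightarrow> Wb = Min {Wa, Wb, Wc} \<and> Wb < Wc"
    "2*b*D - c*D - c*r = 0 \<Longrightarrow> Wb = Min {Wa, Wb, Wc} \<and> Wc = Wb"
    "2*b*D - c*D - c*r > 0 \<Longrightarrow> Wc = Min {Wa, Wb, Wc} \<and> Wc < Wb"
proof -
  define F where "F = 1 + fg"
  have F1: "F \<ge> 1" unfolding F_def fg by simp
  have Wa': "Wa = sqrt 3/4*(a/F)\<^sup>2" and Wb': "Wb = sqrt 3/4*(b/F)\<^sup>2" and Wc': "Wc = sqrt 3/4*c\<^sup>2"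
    using Wa Wb Wc F_def by (simp_all add: power_divide)
  have pos: "0 \<le> c/F" "0 \<le> b/F" "0 \<le> a/F" using ab F1 by auto
  have ba: "b/F < a/F" using ab F1 by (simp add: divide_strict_right_mono)
  have cases: "(fg = 0 \<and> r \<le> D) \<or> (F = (r + D) / (2*D) \<and> r > D)"
    using ab(4) unfolding F_def fg by (auto simp: max_def field_simps)
  have ac: "c < a/F"
    using cases
  proof
    assume "fg = 0 \<and> r \<le> D" thus ?thesis using ab F_def by simp
  next
    assume h: "F = (r + D) / (2*D) \<and> r > D"
    hence "a/F = a*(2*D)/(r+D)" by simp
      hence eq: "a/F = 2*a*D/(r+D)" by (simp add: mult_ac)
    have "c * (r+D) < 2*a*D" using Ea by (simp add: algebra_simps)
    hence "c < 2*a*D/(r+D)" using h ab by (simp add: pos_less_divide_eq)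
    thus ?thesis using eq by simp
  qed
  have Wab: "Wb < Wa" unfolding Wa' Wb' using sq_mono_k[OF pos(2) ba] .
  have Wca: "Wc < Wa" unfolding Wa' Wc' using sq_mono_k[OF _ ac] ab by simp
  show "Wa = Max {Wa, Wb, Wc}" using Wab Wca by (simp add: max_def)
  show "2*b*D - c*D - c*r < 0 \<Longrightarrow> Wb = Min {Wa, Wb, Wc} \<and> Wb < Wc"
  proof -
    assume E: "2*b*D - c*D - c*r < 0"
    have "b/F < c" using cases
    proof
      assume "fg = 0 \<and> r \<le> D"
      hence "c*r \<le> c*D" using ab by (intro mult_left_mono) auto
      moreover have "c*D < b*D" using ab by (simp add: mult_strict_right_mono)
      ultimately show ?thesis using E by linarith
    next
      assume h: "F = (r + D) / (2*D) \<and> r > D"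
      hence "b/F = b*(2*D)/(r+D)" by simp
      hence eq: "b/F = 2*b*D/(r+D)" by (simp add: mult_ac)
      have "2*b*D < c * (r+D)" using E by (simp add: algebra_simps)
      hence "2*b*D/(r+D) < c" using h ab by (simp add: pos_divide_less_eq)
      thus ?thesis using eq by simp
    qed
    hence "Wb < Wc" unfolding Wb' Wc' using sq_mono_k[OF pos(2)] by simp
    thus ?thesis using Wab by (simp add: min_def)
  qed
  show "2*b*D - c*D - c*r = 0 \<Longrightarrow> Wb = Min {Wa, Wb, Wc} \<and> Wc = Wb"
  proof -
    assume E: "2*b*D - c*D - c*r = 0"
    have "b/F = c" using cases
    proof
      assume "fg = 0 \<and> r \<le> D"
      hence "c*r \<le> c*D" using ab by (intro mult_left_mono) auto
      moreover have "c*D < b*D" using ab by (simp add: mult_strict_right_mono)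
      ultimately show ?thesis using E by linarith
    next
      assume h: "F = (r + D) / (2*D) \<and> r > D"
      hence "b/F = b*(2*D)/(r+D)" by simp
      hence eq: "b/F = 2*b*D/(r+D)" by (simp add: mult_ac)
      have "2*b*D = c * (r+D)" using E by (simp add: algebra_simps)
      hence "2*b*D/(r+D) = c" using h ab by simp
      thus ?thesis using eq by simp
    qed
    hence "Wb = Wc" unfolding Wb' Wc' by simp
    thus ?thesis using Wab by (simp add: min_def)
  qed
  show "2*b*D - c*D - c*r > 0 \<Longrightarrow> Wc = Min {Wa, Wb, Wc} \<and> Wc < Wb"
  proof -
    assume E: "2*b*D - c*D - c*r > 0"
    have "c < b/F" using cases
    proof
      assume "fg = 0 \<and> r \<le> D" thus ?thesis using ab F_def by simp
    next
      assume h: "F = (r + D) / (2*D) \<and> r > D"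
      hence "b/F = b*(2*D)/(r+D)" by simp
      hence eq: "b/F = 2*b*D/(r+D)" by (simp add: mult_ac)
      have "c * (r+D) < 2*b*D" using E by (simp add: algebra_simps)
      hence "c < 2*b*D/(r+D)" using h ab by (simp add: pos_less_divide_eq)
      thus ?thesis using eq by simp
    qed
    hence "Wc < Wb" unfolding Wb' Wc' using sq_mono_k[of c "b/F"] ab by simp
    thus ?thesis using Wca by (simp add: min_def)
  qed
qed

theorem mainTheorem4:
  fixes A B C :: point
  defines "a \<equiv> dist B C" and "b \<equiv> dist C A" and "c \<equiv> dist A B"
    and "\<alpha> \<equiv> vertex_angle B A C" and "\<beta> \<equiv> vertex_angle A B C"
    and "Wa \<equiv> WET A B C B C" and "Wb \<equiv> WET A B C C A" and "Wc \<equiv> WET A B C A B"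
  assumes noncol: "\<not> collinear {A, B, C}"
    and sides: "a > b" "b > c"
    and beta: "pi / 3 < \<beta>" "\<beta> < pi / 2"
    and alpha: "pi / 2 < \<alpha>"
  shows "Wa = Max {Wa, Wb, Wc}
     \<and> (\<alpha> / 2 + \<beta> < 2 * pi / 3 \<longrightarrow> Wb = Min {Wa, Wb, Wc} \<and> Wb < Wc)
     \<and> (\<alpha> / 2 + \<beta> = 2 * pi / 3 \<longrightarrow> Wb = Min {Wa, Wb, Wc} \<and> Wc = Wb)
     \<and> (\<alpha> / 2 + \<beta> > 2 * pi / 3 \<longrightarrow> Wc = Min {Wa, Wb, Wc} \<and> Wc < Wb)"
proof -
  define u where "u = C - B"
  define v where "v = A - B"
  define p where "p = u \<bullet> v"
  have an: "a = norm u" unfolding a_def u_def dist_norm by (simp add: norm_minus_commute)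
  have cn: "c = norm v" unfolding c_def v_def dist_norm by simp
  have bn: "b = norm (u - v)" unfolding b_def u_def v_def dist_norm by simp
  have "\<not> collinear {0, v, u}" using noncol unfolding v_def u_def by (simp add: collinear_3)
  hence "\<bar>v \<bullet> u\<bar> \<noteq> norm v * norm u" using norm_cauchy_schwarz_equal by blast
  moreover have "\<bar>v \<bullet> u\<bar> \<le> norm v * norm u" by (rule Cauchy_Schwarz_ineq2)
  ultimately have cs: "\<bar>p\<bar> < c * a" unfolding p_def an cn by (simp add: inner_commute)
  have cpos: "c > 0" and apos: "a > 0"
    using cs cn an by (auto simp: zero_less_mult_iff)
  have bpos: "b > 0" using sides cpos by simp
  have "\<bar>p\<bar>\<^sup>2 < (c*a)\<^sup>2" using cs by (intro power_strict_mono) auto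
  hence "p\<^sup>2 < (c*a)\<^sup>2" by simp
  hence pos0: "a\<^sup>2*c\<^sup>2 - p\<^sup>2 > 0" by (simp add: power_mult_distrib mult.commute)
  define D where "D = sqrt (a\<^sup>2*c\<^sup>2 - p\<^sup>2)"
  have Dp: "D > 0" and DD: "D\<^sup>2 = a\<^sup>2*c\<^sup>2 - p\<^sup>2" using pos0 D_def by auto
  have uu: "u \<bullet> u = a\<^sup>2" and vv: "v \<bullet> v = c\<^sup>2" unfolding an cn by (simp_all add: power2_norm_eq_inner)
  have bb: "b\<^sup>2 = a\<^sup>2 + c\<^sup>2 - 2*p" unfolding bn power2_norm_eq_inner p_def
    by (simp add: inner_diff_left inner_diff_right uu vv inner_commute[of v u])
  have al: "\<alpha> = arccos ((c\<^sup>2 - p) / (c * b))"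
  proof -
    have "B - A = - v" "C - A = u - v" unfolding u_def v_def by simp_all
    moreover have "(-v) \<bullet> (u - v) = c\<^sup>2 - p" by (simp add: inner_diff_right vv p_def inner_commute)
    moreover have "norm (-v) = c" "norm (u - v) = b" using cn bn by simp_all
    ultimately show ?thesis unfolding \<alpha>_def vertex_angle_def by simp
  qed
  have be: "\<beta> = arccos (p / (c * a))"
    unfolding \<beta>_def vertex_angle_def p_def an cn u_def v_def by (simp add: inner_commute)
  note T = trig_part[OF apos bpos cpos Dp DD bb al be beta alpha]
  define fg where "fg = max 0 ((sqrt 3 * (a\<^sup>2 - p) / D - 1) / 2)"
  have sp: "sqrt 3 * p \<le> D"
  proof -
    have "(2*p)\<^sup>2 \<le> (a*c)\<^sup>2" using T(1,2) by (intro power_mono) auto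
    hence "4*p\<^sup>2 \<le> a\<^sup>2*c\<^sup>2" by (simp add: power_mult_distrib)
    hence "(sqrt 3 * p)\<^sup>2 \<le> D\<^sup>2" unfolding DD by (simp add: power_mult_distrib)
    thus ?thesis using Dp by (meson power2_le_imp_le less_imp_le)
  qed
  have z1: "0 = max 0 ((sqrt 3 * p / D - 1) / 2)"
  proof -
    have "sqrt 3 * p / D \<le> 1" using sp Dp by (simp add: divide_le_eq)
    hence "(sqrt 3 * p / D - 1) / 2 \<le> 0" by simp
    thus ?thesis by (simp add: max_def)
  qed
  have z2: "0 = max 0 ((sqrt 3 * (c\<^sup>2 - p) / D - 1) / 2)"
  proof -
    have "sqrt 3 * (c\<^sup>2 - p) < 0" using T(3) by (simp add: mult_pos_neg)
    hence "sqrt 3 * (c\<^sup>2 - p) / D < 0" using Dp by (simp add: divide_neg_pos)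
    hence "(sqrt 3 * (c\<^sup>2 - p) / D - 1) / 2 \<le> 0" by simp
    thus ?thesis by (simp add: max_def)
  qed
  have pA: "p = (C - B) \<bullet> (A - B)" unfolding p_def u_def v_def ..
  have uA: "a\<^sup>2 = (C - B) \<bullet> (C - B)" using uu unfolding u_def by simp
  have vA: "c\<^sup>2 = (A - B) \<bullet> (A - B)" using vv unfolding v_def by simp
  have Wa: "Wa = sqrt 3/4*(a\<^sup>2/(1+0+fg)\<^sup>2)"
  proof -
    have h: "{A,B,C} = {B,C,A}" by auto
    show ?thesis unfolding Wa_def WET_def wedged_areas_def h
      by (rule WET_side[OF uA pA vA pos0 D_def z1 fg_def])
  qed
  have Wb: "Wb = sqrt 3/4*(b\<^sup>2/(1+fg+0)\<^sup>2)"
  proof -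
    have h: "{A,B,C} = {C,A,B}" by auto
    have e1: "b\<^sup>2 = (A - C) \<bullet> (A - C)" unfolding bn power2_norm_eq_inner u_def v_def by (simp add: inner_diff_left inner_diff_right inner_commute)
    have e2: "a\<^sup>2 - p = (A - C) \<bullet> (B - C)" unfolding uu[symmetric] p_def u_def v_def
      by (simp add: inner_diff_left inner_diff_right inner_commute)
    have e3: "a\<^sup>2 = (B - C) \<bullet> (B - C)" unfolding uu[symmetric] u_def by (simp add: inner_diff_left inner_diff_right inner_commute)
    have e4: "b\<^sup>2 * a\<^sup>2 - (a\<^sup>2 - p)\<^sup>2 = a\<^sup>2*c\<^sup>2 - p\<^sup>2" unfolding bb by (simp add: algebra_simps power2_eq_square)
    have e5: "b\<^sup>2 - (a\<^sup>2 - p) = c\<^sup>2 - p" unfolding bb by simp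
    have D': "D = sqrt (b\<^sup>2 * a\<^sup>2 - (a\<^sup>2 - p)\<^sup>2)" unfolding e4 D_def ..
    have f2: "0 = max 0 ((sqrt 3 * (b\<^sup>2 - (a\<^sup>2 - p)) / D - 1) / 2)" unfolding e5 by (rule z2)
    show ?thesis unfolding Wb_def WET_def wedged_areas_def h
      by (rule WET_side[OF e1 e2 e3 _ D' fg_def f2]) (unfold e4, rule pos0)
  qed
  have Wc: "Wc = sqrt 3/4*(c\<^sup>2/(1+0+0)\<^sup>2)"
  proof -
    have e1: "c\<^sup>2 = (B - A) \<bullet> (B - A)" unfolding vv[symmetric] v_def by (simp add: inner_diff_left inner_diff_right inner_commute)
    have e2: "c\<^sup>2 - p = (B - A) \<bullet> (C - A)" unfolding vv[symmetric] p_def u_def v_def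
      by (simp add: inner_diff_left inner_diff_right inner_commute)
    have e3: "b\<^sup>2 = (C - A) \<bullet> (C - A)" unfolding bn power2_norm_eq_inner u_def v_def by (simp add: inner_diff_left inner_diff_right inner_commute)
    have e4: "c\<^sup>2 * b\<^sup>2 - (c\<^sup>2 - p)\<^sup>2 = a\<^sup>2*c\<^sup>2 - p\<^sup>2" unfolding bb by (simp add: algebra_simps power2_eq_square)
    have e5: "c\<^sup>2 - (c\<^sup>2 - p) = p" by simp
    have D': "D = sqrt (c\<^sup>2 * b\<^sup>2 - (c\<^sup>2 - p)\<^sup>2)" unfolding e4 D_def ..
    have f2: "0 = max 0 ((sqrt 3 * (c\<^sup>2 - (c\<^sup>2 - p)) / D - 1) / 2)" unfolding e5 by (rule z1)
    show ?thesis unfolding Wc_def WET_def wedged_areas_def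
      by (rule WET_side[OF e1 e2 e3 _ D' z2 f2]) (unfold e4, rule pos0)
  qed
  define r where "r = sqrt 3 * (a\<^sup>2 - p)"
  have fg': "fg = max 0 ((r/D - 1)/2)" unfolding fg_def r_def ..
  have Eeq: "2*x*D - c*D - sqrt 3*c*(a\<^sup>2-p) = 2*x*D - c*D - c*r" for x unfolding r_def by simp
  note F = final_real[OF sides cpos Dp fg' Wa Wb Wc T(4)[unfolded Eeq]]
  show ?thesis using F T(5,6,7) unfolding Eeq by blast
qed

end
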